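(* Let $\xi=e^{2\pi i/3}$. For all integers $k\ge2$ and $i\in\{0,1,2,3\}$, $$[t^{2k-i}]\frac{(1-t)^{k-2}(1-\xi t)^{k-1}}{1-\xi^2t}=3^{k-2}(\xi-1)\xi^{k+i-1}\quad\text{and}\quad [t^{2k-i}]\frac{(1-t)^{k-2}(1-\xi^2 t)^{k-1}}{1-\xi t}=3^{k-2}(1-\xi)\xi^{2k-i}.$$
   Context: $[t^m]F(t)$ denotes the coefficient of $t^m$ in the formal power series $F(t)$. *)

theory Defs
  imports Complex_Main "HOL-Computational_Algebra.Formal_Power_Series"
begin

definition xi :: complex where
  "xi = exp (2 * pi * \<i> / 3)"

end

theory Submission imports Defs "HOL-Computational_Algebra.Polynomial_FPS" begin

lemma gp_inv:
  fixes c :: complex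
  shows "inverse (1 - fps_const c * fps_X) = Abs_fps (\<lambda>n. c ^ n)"
proof (rule fps_inverse_unique)
  show "(1 - fps_const c * fps_X) * Abs_fps (\<lambda>n. c ^ n) = 1"
  proof (rule fps_ext)
    fix n
    have "(1 - fps_const c * fps_X) * Abs_fps (\<lambda>n. c ^ n) =
          Abs_fps (\<lambda>n. c ^ n) - fps_const c * (fps_X * Abs_fps (\<lambda>n. c ^ n))"
      by (simp add: algebra_simps)
    then show "fps_nth ((1 - fps_const c * fps_X) * Abs_fps (\<lambda>n. c ^ n)) n = fps_nth (1::complex fps) n"
      by (cases n) auto
  qed
qed

lemma coeff_div:
  fixes c :: complex and p :: "complex poly"
  assumes "c \<noteq> 0" "degree p \<le> n"
  shows "fps_nth (fps_of_poly p / (1 - fps_const c * fps_X)) n = c ^ n * poly p (inverse c)"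
proof -
  have "fps_of_poly p / (1 - fps_const c * fps_X) = fps_of_poly p * Abs_fps (\<lambda>n. c ^ n)"
    by (subst fps_divide_unit) (simp_all add: gp_inv)
  then have "fps_nth (fps_of_poly p / (1 - fps_const c * fps_X)) n = (\<Sum>i=0..n. coeff p i * c ^ (n - i))"
    by (simp add: fps_mult_nth)
  also have "\<dots> = (\<Sum>i\<le>n. coeff p i * c ^ (n - i))"
    by (simp add: atLeast0AtMost)
  also have "\<dots> = (\<Sum>i\<le>degree p. coeff p i * c ^ (n - i))"
    using assms(2) by (intro sum.mono_neutral_right) (auto simp: coeff_eq_0)
  also have "\<dots> = c ^ n * poly p (inverse c)"
    unfolding poly_altdef sum_distrib_left
    using assms by (intro sum.cong) (auto simp: power_diff field_simps power_inverse)
  finally show ?thesis .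
qed

lemma xi3: "xi ^ 3 = 1"
proof -
  have "xi ^ 3 = exp (3 * (2 * pi * \<i> / 3))" unfolding xi_def by (subst exp_of_nat_mult[symmetric]) simp
  also have "\<dots> = exp (2 * of_real pi * \<i>)" by (simp add: field_simps)
  finally show ?thesis by (metis exp_two_pi_i)
qed

lemma xi_ne1: "xi \<noteq> 1"
proof -
  have "xi = cis (2 * pi / 3)" unfolding xi_def cis_conv_exp by (simp add: field_simps)
  then have "Re xi = cos (2 * pi / 3)" by (metis cis.sel(1))
  then have "Re xi = - 1 / 2" using cos_120 by simp
  then show ?thesis by auto
qed

lemma xi_sum: "1 + xi + xi ^ 2 = 0"
proof -
  have "(xi - 1) * (1 + xi + xi ^ 2) = xi ^ 3 - 1" by (simp add: algebra_simps power2_eq_square power3_eq_cube)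
  then have "(xi - 1) * (1 + xi + xi ^ 2) = 0" using xi3 by simp
  then show ?thesis using xi_ne1 by simp
qed


lemma xi_pow_mod: "xi ^ n = xi ^ (n mod 3)"
proof -
  have "xi ^ n = xi ^ (3 * (n div 3) + n mod 3)" by simp
  also have "\<dots> = xi ^ (n mod 3)" by (simp only: power_add power_mult xi3) simp
  finally show ?thesis .
qed

lemma xi_sq: "xi ^ 2 = - 1 - xi" using xi_sum by (simp add: algebra_simps eq_neg_iff_add_eq_0)

lemma xi_sq': "xi * xi = - 1 - xi" using xi_sq by (simp add: power2_eq_square)

lemma key1: "i \<le> 3 \<Longrightarrow> xi ^ (8 - 2 * i) * (1 - xi ^ 2) = (xi - 1) * xi ^ (1 + i)"
proof -
  assume "i \<le> 3"
  then consider "i = 0" | "i = 1" | "i = 2" | "i = 3" by linarith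
  then show ?thesis
  proof cases
    case 1 then show ?thesis by (subst (1 2) xi_pow_mod) (simp add: xi_sq algebra_simps xi_sq')
  next
    case 2 then show ?thesis by (subst (1 2) xi_pow_mod) (simp add: xi_sq algebra_simps xi_sq')
  next
    case 3 then show ?thesis by (subst (1 2) xi_pow_mod) (simp add: xi_sq algebra_simps xi_sq')
  next
    case 4 then show ?thesis by (subst (1 2) xi_pow_mod) (simp add: xi_sq algebra_simps xi_sq')
  qed
qed


lemma fps_lin: "fps_of_poly [:1, - c:] = 1 - fps_const (c::complex) * fps_X"
proof (rule fps_ext)
  fix n
  show "fps_nth (fps_of_poly [:1, - c:]) n = fps_nth (1 - fps_const c * fps_X) n"
    by (cases n) (auto simp: fps_of_poly_nth coeff_pCons split: nat.split)
qed

lemma deg_bound: "degree ([:1, - a:] ^ p * [:1, - (b::complex):] ^ q) \<le> p + q"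
proof -
  have "degree ([:1, - a:] ^ p * [:1, - b:] ^ q) \<le> degree ([:1, - a:] ^ p) + degree ([:1, - b:] ^ q)"
    by (rule degree_mult_le)
  also have "\<dots> \<le> p * degree [:1, - a:] + q * degree [:1, - b:]"
    using degree_power_le[of "[:1, - a:]" p] degree_power_le[of "[:1, - b:]" q] by (simp add: mult.commute)
  also have "\<dots> \<le> p + q" by (intro add_mono) auto
  finally show ?thesis .
qed

lemma prod3: "(1 - xi) * (1 - xi ^ 2) = 3"
  by (simp add: algebra_simps xi_sq xi_sq' power2_eq_square)

lemma xi_ne0: "xi \<noteq> 0" using xi3 by auto

lemma inv_xi2: "inverse (xi ^ 2) = xi"
  using xi3 by (intro inverse_unique) (simp add: power3_eq_cube power2_eq_square mult.assoc)

lemma inv_xi: "inverse xi = xi ^ 2"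
  using xi3 by (intro inverse_unique) (simp add: power3_eq_cube power2_eq_square mult.assoc)

theorem lemma8:
  fixes k i :: nat
  assumes "k \<ge> 2" and "i \<le> 3"
  shows "fps_nth ((1 - fps_X) ^ (k - 2) * (1 - fps_const xi * fps_X) ^ (k - 1)
                   / (1 - fps_const (xi ^ 2) * fps_X)) (2 * k - i)
           = 3 ^ (k - 2) * (xi - 1) * xi ^ (k + i - 1) \<and>
         fps_nth ((1 - fps_X) ^ (k - 2) * (1 - fps_const (xi ^ 2) * fps_X) ^ (k - 1)
                   / (1 - fps_const xi * fps_X)) (2 * k - i)
           = 3 ^ (k - 2) * (1 - xi) * xi ^ (2 * k - i)"
proof -
  obtain m where k: "k = m + 2" using assms(1) by (metis add.commute le_iff_add)
  define p1 where "p1 = [:1, - 1:] ^ (k - 2) * [:1, - xi:] ^ (k - 1)"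
  define p2 where "p2 = [:1, - 1:] ^ (k - 2) * [:1, - (xi ^ 2):] ^ (k - 1)"
  have f1: "fps_of_poly p1 = (1 - fps_X) ^ (k - 2) * (1 - fps_const xi * fps_X) ^ (k - 1)"
    unfolding p1_def fps_of_poly_mult fps_of_poly_power fps_lin[of 1, simplified] fps_lin by simp
  have f2: "fps_of_poly p2 = (1 - fps_X) ^ (k - 2) * (1 - fps_const (xi ^ 2) * fps_X) ^ (k - 1)"
    unfolding p2_def fps_of_poly_mult fps_of_poly_power fps_lin[of 1, simplified] fps_lin by simp
  have d1: "degree p1 \<le> 2 * k - i" unfolding p1_def using deg_bound[of 1 "k-2" xi "k-1"] assms by linarith
  have d2: "degree p2 \<le> 2 * k - i" unfolding p2_def using deg_bound[of 1 "k-2" "xi^2" "k-1"] assms by linarith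
  have xi2ne: "xi ^ 2 \<noteq> 0" using xi_ne0 by simp
  have e1: "fps_nth (fps_of_poly p1 / (1 - fps_const (xi ^ 2) * fps_X)) (2 * k - i)
        = (xi ^ 2) ^ (2 * k - i) * poly p1 xi"
    using coeff_div[OF xi2ne d1] unfolding inv_xi2 .
  have e2: "fps_nth (fps_of_poly p2 / (1 - fps_const xi * fps_X)) (2 * k - i)
        = xi ^ (2 * k - i) * poly p2 (xi ^ 2)"
    using coeff_div[OF xi_ne0 d2] unfolding inv_xi .
  have q1: "poly [:1, - 1:] xi = 1 - xi" by simp
  have q2: "poly [:1, - xi:] xi = 1 - xi ^ 2" by (simp add: power2_eq_square)
  have q3: "poly [:1, - 1:] (xi ^ 2) = 1 - xi ^ 2" by simp
  have "xi ^ 4 = xi" by (subst xi_pow_mod) simp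
  then have x4: "xi ^ 2 * xi ^ 2 = xi" by (simp add: power_add[symmetric])
  have q4: "poly [:1, - (xi ^ 2):] (xi ^ 2) = 1 - xi" using x4 by simp
  have km: "k - 2 = m" "k - 1 = m + 1" using k by simp_all
  have pp1: "poly p1 xi = 3 ^ m * (1 - xi ^ 2)"
  proof -
    have "poly p1 xi = (poly [:1, - 1:] xi) ^ m * (poly [:1, - xi:] xi) ^ (m + 1)"
      unfolding p1_def km poly_mult poly_power ..
    also have "\<dots> = ((1 - xi) * (1 - xi ^ 2)) ^ m * (1 - xi ^ 2)"
      unfolding q1 q2 by (simp only: power_mult_distrib power_add power_one_right mult_ac)
    finally show ?thesis unfolding prod3 .
  qed
  have pp2: "poly p2 (xi ^ 2) = 3 ^ m * (1 - xi)"
  proof -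
    have "poly p2 (xi ^ 2) = (poly [:1, - 1:] (xi ^ 2)) ^ m * (poly [:1, - (xi ^ 2):] (xi ^ 2)) ^ (m + 1)"
      unfolding p2_def km poly_mult poly_power ..
    also have "\<dots> = ((1 - xi) * (1 - xi ^ 2)) ^ m * (1 - xi)"
      unfolding q3 q4 by (simp only: power_mult_distrib power_add power_one_right mult_ac)
    finally show ?thesis unfolding prod3 .
  qed
  have ex1: "(xi ^ 2) ^ (2 * k - i) = xi ^ m * xi ^ (8 - 2 * i)"
  proof -
    have "(xi ^ 2) ^ (2 * k - i) = xi ^ (3 * m + m + (8 - 2 * i))"
      unfolding power_mult[symmetric] k using assms(2) by (intro arg_cong[where f="\<lambda>n. xi ^ n"]) arith
    also have "\<dots> = xi ^ m * xi ^ (8 - 2 * i)"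
      by (simp only: power_add power_mult xi3) simp
    finally show ?thesis .
  qed
  have ex2: "xi ^ (k + i - 1) = xi ^ m * xi ^ (1 + i)"
    unfolding k power_add[symmetric] by (intro arg_cong[where f="\<lambda>n. xi ^ n"]) arith
  have r1: "fps_nth ((1 - fps_X) ^ (k - 2) * (1 - fps_const xi * fps_X) ^ (k - 1)
                   / (1 - fps_const (xi ^ 2) * fps_X)) (2 * k - i)
           = 3 ^ (k - 2) * (xi - 1) * xi ^ (k + i - 1)"
  proof -
    have "fps_nth ((1 - fps_X) ^ (k - 2) * (1 - fps_const xi * fps_X) ^ (k - 1)
                   / (1 - fps_const (xi ^ 2) * fps_X)) (2 * k - i)
         = (xi ^ 2) ^ (2 * k - i) * poly p1 xi" unfolding f1[symmetric] e1 ..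
    also have "\<dots> = 3 ^ m * xi ^ m * (xi ^ (8 - 2 * i) * (1 - xi ^ 2))"
      unfolding ex1 pp1 by (simp only: mult_ac)
    also have "\<dots> = 3 ^ m * xi ^ m * ((xi - 1) * xi ^ (1 + i))"
      unfolding key1[OF assms(2)] ..
    also have "\<dots> = 3 ^ m * (xi - 1) * (xi ^ m * xi ^ (1 + i))"
      by (simp only: mult_ac)
    also have "\<dots> = 3 ^ (k - 2) * (xi - 1) * xi ^ (k + i - 1)"
      unfolding ex2 km(1) ..
    finally show ?thesis .
  qed
  have r2: "fps_nth ((1 - fps_X) ^ (k - 2) * (1 - fps_const (xi ^ 2) * fps_X) ^ (k - 1)
                   / (1 - fps_const xi * fps_X)) (2 * k - i)
           = 3 ^ (k - 2) * (1 - xi) * xi ^ (2 * k - i)"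
  proof -
    have "fps_nth ((1 - fps_X) ^ (k - 2) * (1 - fps_const (xi ^ 2) * fps_X) ^ (k - 1)
                   / (1 - fps_const xi * fps_X)) (2 * k - i)
         = xi ^ (2 * k - i) * poly p2 (xi ^ 2)" unfolding f2[symmetric] e2 ..
    also have "\<dots> = 3 ^ (k - 2) * (1 - xi) * xi ^ (2 * k - i)"
      unfolding pp2 k by (simp only: mult_ac add_diff_cancel_right')
    finally show ?thesis .
  qed
  show ?thesis using r1 r2 by blast
qed

end
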